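(* Let $a, b, b'$ be complex numbers and $A>0$ such that $|b' - b| \le 1$ and $|a| e^{|b|} \le A$. Then $$\| Y(b) X(a) Y(-b) - Y(b') X(a) Y(-b') \| \le 10\, e^{A} |a|\, e^{|b|}\, |b' - b|.$$
   Context: For $U \in \mathfrak{sl}_2(\mathbb{C})$ and $t\in\mathbb{C}$, $U(t) = \exp(tU)$. $X = \begin{pmatrix} 1/2 & 0 \\ 0 & -1/2 \end{pmatrix}$, $\theta = \begin{pmatrix} 0 & -1/2 \\ 1/2 & 0\end{pmatrix}$, $Y = \exp(\tfrac{\pi}{2}\theta) X \exp(-\tfrac{\pi}{2}\theta)$. $\|\cdot\|$ is the operator norm on $M_2(\mathbb{C})$ with respect to the standard Hermitian norm. *)

theory Defs
  imports "HOL-Analysis.Analysis"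
begin

type_synonym cmat2 = "complex^2^2"

primrec mpow :: "cmat2 \<Rightarrow> nat \<Rightarrow> cmat2" where
  "mpow M 0 = mat 1"
| "mpow M (Suc n) = M ** mpow M n"

definition csmult :: "complex \<Rightarrow> cmat2 \<Rightarrow> cmat2" where
  "csmult c M = (\<chi> i j. c * M $ i $ j)"

definition mexp :: "cmat2 \<Rightarrow> cmat2" where
  "mexp M = (\<Sum>n. (1 / fact n :: real) *\<^sub>R mpow M n)"

definition flow :: "cmat2 \<Rightarrow> complex \<Rightarrow> cmat2" where
  "flow U t = mexp (csmult t U)"

definition opnorm :: "cmat2 \<Rightarrow> real" where
  "opnorm M = onorm (\<lambda>x::complex^2. M *v x)"

definition Xm :: cmat2 where
  "Xm = (\<chi> i j. if i = 1 \<and> j = 1 then 1/2 else if i = 2 \<and> j = 2 then -1/2 else 0)"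

definition thetam :: cmat2 where
  "thetam = (\<chi> i j. if i = 1 \<and> j = 2 then -1/2 else if i = 2 \<and> j = 1 then 1/2 else 0)"

definition Ym :: cmat2 where
  "Ym = mexp (csmult (pi/2) thetam) ** Xm ** mexp (csmult (-(pi/2)) thetam)"

end

theory Submission
  imports Defs "HOL-Analysis.Analysis"
begin

definition mk :: "complex \<Rightarrow> complex \<Rightarrow> complex \<Rightarrow> complex \<Rightarrow> cmat2" where
  "mk p q r s = (\<chi> i j. if i = 1 then (if j = 1 then p else q) else (if j = 1 then r else s))"

lemma mk_nth [simp]:
  "mk p q r s $ 1 $ 1 = p" "mk p q r s $ 1 $ 2 = q" "mk p q r s $ 2 $ 1 = r" "mk p q r s $ 2 $ 2 = s"
  by (simp_all add: mk_def)

lemma mat_eq_mk: "(M::cmat2) = mk (M$1$1) (M$1$2) (M$2$1) (M$2$2)"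
  by (simp add: vec_eq_iff forall_2 mk_def)

lemma mk_eq_iff: "mk p q r s = mk p' q' r' s' \<longleftrightarrow> p = p' \<and> q = q' \<and> r = r' \<and> s = s'"
  by (metis mk_nth)

lemma mk_mult: "mk a b c d ** mk e f g h = mk (a*e+b*g) (a*f+b*h) (c*e+d*g) (c*f+d*h)"
  by (simp add: vec_eq_iff forall_2 mk_def matrix_matrix_mult_def sum_2)

lemma mk_diff: "mk a b c d - mk e f g h = mk (a-e) (b-f) (c-g) (d-h)"
  by (simp add: vec_eq_iff forall_2 mk_def)

lemma mk_scaleR: "x *\<^sub>R mk a b c d = mk (x *\<^sub>R a) (x *\<^sub>R b) (x *\<^sub>R c) (x *\<^sub>R d)"
  by (simp add: vec_eq_iff forall_2 mk_def)

lemma mk_one: "mat 1 = mk 1 0 0 1"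
  by (simp add: vec_eq_iff forall_2 mk_def mat_def)

lemma csmult_mk: "csmult x (mk a b c d) = mk (x*a) (x*b) (x*c) (x*d)"
  by (simp add: vec_eq_iff forall_2 mk_def csmult_def)

lemma Xm_mk: "Xm = mk (1/2) 0 0 (-1/2)"
  by (simp add: vec_eq_iff forall_2 mk_def Xm_def)

lemma thetam_mk: "thetam = mk 0 (-1/2) (1/2) 0"
  by (simp add: vec_eq_iff forall_2 mk_def thetam_def)

lemma sums_mk:
  assumes "(\<lambda>n. p n) sums p0" "(\<lambda>n. q n) sums q0" "(\<lambda>n. r n) sums r0" "(\<lambda>n. s n) sums s0"
  shows "(\<lambda>n. mk (p n) (q n) (r n) (s n)) sums mk p0 q0 r0 s0"
proof -
  have c: "(\<lambda>n. mk (p n) (q n) (r n) (s n) $ i $ j) sums (mk p0 q0 r0 s0 $ i $ j)" for i j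
    using assms exhaust_2[of i] exhaust_2[of j] by auto
  show ?thesis unfolding sums_def
  proof (rule vec_tendstoI, rule vec_tendstoI)
    fix i j
    show "((\<lambda>x. (\<Sum>n<x. mk (p n) (q n) (r n) (s n)) $ i $ j) \<longlongrightarrow> mk p0 q0 r0 s0 $ i $ j) sequentially"
      using c[of i j] unfolding sums_def by (simp add: sum_component)
  qed
qed

lemma mexp_sums: "(\<lambda>n. (1 / fact n :: real) *\<^sub>R mpow M n) sums L \<Longrightarrow> mexp M = L"
  unfolding mexp_def by (rule sums_unique[symmetric])

lemma mpow_diag: "mpow (mk x 0 0 y) n = mk (x^n) 0 0 (y^n)"
  by (induction n) (simp_all add: mk_one mk_mult)

lemma exp_sums': "(\<lambda>n. (1 / fact n :: real) *\<^sub>R (x::complex)^n) sums exp x"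
  using exp_converges[of x] by (simp add: divide_inverse_commute scaleR_conv_of_real)

lemma mexp_diag: "mexp (mk x 0 0 y) = mk (exp x) 0 0 (exp y)"
  apply (rule mexp_sums)
  unfolding mpow_diag mk_scaleR
  by (rule sums_mk) (simp_all add: exp_sums')

lemma mpow_sym: "mpow (mk 0 w w 0) n =
  mk ((w^n + (-w)^n)/2) ((w^n - (-w)^n)/2) ((w^n - (-w)^n)/2) ((w^n + (-w)^n)/2)"
  by (induction n) (simp_all add: mk_one mk_mult mk_eq_iff field_simps)

lemma mpow_anti: "mpow (mk 0 (-t) t 0) n =
  mk (((\<i>*t)^n + (-(\<i>*t))^n)/2) (\<i> * (((\<i>*t)^n - (-(\<i>*t))^n)/2))
     (-\<i> * (((\<i>*t)^n - (-(\<i>*t))^n)/2)) (((\<i>*t)^n + (-(\<i>*t))^n)/2)"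
  by (induction n) (simp_all add: mk_one mk_mult mk_eq_iff field_simps)

lemma ev_sums: fixes z :: complex shows "(\<lambda>n. (1 / fact n :: real) *\<^sub>R ((z^n + (-z)^n)/2)) sums ((exp z + exp (-z))/2)"
proof -
  have "(\<lambda>n. ((1 / fact n :: real) *\<^sub>R z^n + (1 / fact n :: real) *\<^sub>R (-z)^n)/2) sums ((exp z + exp (-z))/2)"
    by (intro sums_divide sums_add exp_sums')
  then show ?thesis by (simp add: scaleR_conv_of_real field_simps)
qed

lemma od_sums: fixes z :: complex shows "(\<lambda>n. (1 / fact n :: real) *\<^sub>R ((z^n - (-z)^n)/2)) sums ((exp z - exp (-z))/2)"
proof -
  have "(\<lambda>n. ((1 / fact n :: real) *\<^sub>R z^n - (1 / fact n :: real) *\<^sub>R (-z)^n)/2) sums ((exp z - exp (-z))/2)"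
    by (intro sums_divide sums_diff exp_sums')
  then show ?thesis by (simp add: scaleR_conv_of_real field_simps)
qed

lemma mexp_sym: "mexp (mk 0 w w 0) =
  mk ((exp w + exp (-w))/2) ((exp w - exp (-w))/2) ((exp w - exp (-w))/2) ((exp w + exp (-w))/2)"
  apply (rule mexp_sums)
  unfolding mpow_sym mk_scaleR
  by (rule sums_mk) (simp_all add: ev_sums od_sums)

lemma mexp_anti: "mexp (mk 0 (-t) t 0) =
  mk ((exp (\<i>*t) + exp (-(\<i>*t)))/2) (\<i> * ((exp (\<i>*t) - exp (-(\<i>*t)))/2))
     (-\<i> * ((exp (\<i>*t) - exp (-(\<i>*t)))/2)) ((exp (\<i>*t) + exp (-(\<i>*t)))/2)"
  apply (rule mexp_sums)
  unfolding mpow_anti mk_scaleR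
  apply (rule sums_mk)
     apply (simp_all only: ev_sums)
  using sums_mult[OF od_sums[of "\<i>*t"], of "\<i>"] sums_mult[OF od_sums[of "\<i>*t"], of "-\<i>"]
  by (simp_all only: scaleR_conv_of_real mult.left_commute[of _ "\<i>"] mult.left_commute[of _ "-\<i>"])

lemma Ym_mk: "Ym = mk 0 (1/2) (1/2) 0"
proof -
  define t where "t = complex_of_real (pi/4)"
  define E where "E = exp (\<i> * t)"
  have E0: "E \<noteq> 0" by (simp add: E_def)
  have E2: "E * E = \<i>"
  proof -
    have "E * E = exp (2 * (\<i> * t))" unfolding E_def by (simp add: exp_add[symmetric])
    also have "\<dots> = exp (\<i> * of_real (pi/2))" by (simp add: t_def)
    also have "\<dots> = cis (pi/2)" by (simp add: cis_conv_exp)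
    also have "\<dots> = \<i>" by (simp add: cis.ctr complex_eq_iff)
    finally show ?thesis .
  qed
  have Ei: "exp (-(\<i> * t)) = 1/E" unfolding E_def by (simp add: exp_minus field_simps)
  have m1: "csmult (pi/2) thetam = mk 0 (- t) t 0"
    by (simp add: thetam_mk csmult_mk t_def)
  have m2: "csmult (-(pi/2)) thetam = mk 0 (- (- t)) (- t) 0"
    by (simp add: thetam_mk csmult_mk t_def)
  have Ei2: "exp (\<i> * - t) = 1/E" "exp (- (\<i> * - t)) = E" using Ei by (simp_all add: E_def)
  have E3: "E * (E * c) = \<i> * c" for c using E2 by (metis mult.assoc)
  show ?thesis
    unfolding Ym_def m1 m2 mexp_anti Xm_mk mk_mult
    apply (simp only: Ei Ei2 E_def[symmetric])
    apply (simp add: mk_eq_iff field_simps E0 E3 E2)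
    done
qed

definition ch :: "complex \<Rightarrow> complex" where "ch z = (exp z + exp (-z))/2"
definition sh :: "complex \<Rightarrow> complex" where "sh z = (exp z - exp (-z))/2"

lemma flowY: "flow Ym b = mk (ch (b/2)) (sh (b/2)) (sh (b/2)) (ch (b/2))"
proof -
  have "csmult b Ym = mk 0 (b/2) (b/2) 0" by (simp add: Ym_mk csmult_mk)
  then show ?thesis unfolding flow_def by (simp add: mexp_sym ch_def sh_def)
qed

lemma flowX: "flow Xm a = mk (exp (a/2)) 0 0 (exp (-(a/2)))"
proof -
  have "csmult a Xm = mk (a/2) 0 0 (-(a/2))" by (simp add: Xm_mk csmult_mk)
  then show ?thesis unfolding flow_def by (simp add: mexp_diag)
qed

lemma prod_formula:
  "flow Ym b ** flow Xm a ** flow Ym (-b) =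
    mk ((exp (a/2) + exp (-(a/2)))/2 + ch b * ((exp (a/2) - exp (-(a/2)))/2))
       (- (sh b * ((exp (a/2) - exp (-(a/2)))/2)))
       (sh b * ((exp (a/2) - exp (-(a/2)))/2))
       ((exp (a/2) + exp (-(a/2)))/2 - ch b * ((exp (a/2) - exp (-(a/2)))/2))"
proof -
  define E where "E = exp (b/2)"
  have E0: "E \<noteq> 0" by (simp add: E_def)
  have e1: "exp (-(b/2)) = 1/E" by (simp add: E_def exp_minus field_simps)
  have e2: "exp b = E * E" unfolding E_def by (simp add: exp_add[symmetric])
  have e3: "exp (-b) = 1/(E * E)" using e2 by (simp add: exp_minus field_simps)
  have e4: "exp (-b/2) = 1/E" using e1 by simp
  show ?thesis
    unfolding flowY flowX mk_mult ch_def sh_def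
    apply (simp only: e1 e2 e3 e4 E_def[symmetric] minus_minus)
    apply (simp add: mk_eq_iff field_simps E0 E_def[symmetric])
    done
qed

lemma opnorm_mk: "opnorm (mk p q r s) \<le> norm p + norm q + norm r + norm s"
  unfolding opnorm_def
proof (rule onorm_le)
  fix x :: "complex^2"
  have n1: "norm (x$1) \<le> norm x" "norm (x$2) \<le> norm x" by (rule Finite_Cartesian_Product.norm_nth_le)+
  have "norm (mk p q r s *v x) \<le> norm ((mk p q r s *v x)$1) + norm ((mk p q r s *v x)$2)"
    unfolding norm_vec_def by (rule order_trans[OF L2_set_le_sum]) (simp_all add: sum_2)
  also have "\<dots> = norm (p * x$1 + q * x$2) + norm (r * x$1 + s * x$2)"
    by (simp add: matrix_vector_mult_def sum_2)
  also have "\<dots> \<le> (norm p * norm (x$1) + norm q * norm (x$2)) + (norm r * norm (x$1) + norm s * norm (x$2))"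
    by (intro add_mono order_trans[OF norm_triangle_ineq]) (simp_all add: norm_mult)
  also have "\<dots> \<le> (norm p * norm x + norm q * norm x) + (norm r * norm x + norm s * norm x)"
    by (intro add_mono mult_left_mono n1) simp_all
  also have "\<dots> = (norm p + norm q + norm r + norm s) * norm x" by (simp add: algebra_simps)
  finally show "norm (mk p q r s *v x) \<le> (norm p + norm q + norm r + norm s) * norm x" .
qed

lemma exp_minus_one_bound: "norm (exp (h::complex) - 1) \<le> exp (norm h) * norm h"
  using Taylor_exp_field[of h 0] by simp

lemma exp_diff_bound:
  fixes z h :: complex
  assumes "norm h \<le> 1"
  shows "norm (exp (z + h) - exp z) \<le> exp 1 * exp (norm z) * norm h"
proof -
  have "exp (z + h) - exp z = exp z * (exp h - 1)" by (simp add: exp_add algebra_simps)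
  then have "norm (exp (z + h) - exp z) = norm (exp z) * norm (exp h - 1)" by (simp add: norm_mult)
  also have "\<dots> \<le> exp (norm z) * (exp 1 * norm h)"
  proof (intro mult_mono)
    show "norm (exp z) \<le> exp (norm z)" by (rule norm_exp)
    have "exp (norm h) \<le> exp 1" using assms by simp
    then show "norm (exp h - 1) \<le> exp 1 * norm h"
      using exp_minus_one_bound[of h] by (meson mult_right_mono norm_ge_zero order_trans)
  qed simp_all
  finally show ?thesis by (simp add: algebra_simps)
qed

lemma ch_diff: assumes "norm (b' - b) \<le> 1"
  shows "norm (ch b - ch b') \<le> exp 1 * exp (norm b) * norm (b' - b)"
proof -
  have 1: "norm (exp (b + (b' - b)) - exp b) \<le> exp 1 * exp (norm b) * norm (b' - b)"
    by (rule exp_diff_bound[OF assms])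
  have 2: "norm (exp (-b + (-(b' - b))) - exp (-b)) \<le> exp 1 * exp (norm (-b)) * norm (-(b' - b))"
    by (rule exp_diff_bound) (metis assms norm_minus_cancel)
  define U where "U = exp (b + (b' - b)) - exp b"
  define V where "V = exp (-b + (-(b' - b))) - exp (-b)"
  have eq: "ch b - ch b' = - (U + V)/2"
    by (simp add: ch_def U_def V_def field_simps)
  have "norm (ch b - ch b') = norm (- (U + V)) / norm (2::complex)" by (simp only: eq norm_divide)
  also have "\<dots> = norm (U + V) / 2" by (simp only: norm_minus_cancel) simp
  also have "\<dots> \<le> (norm U + norm V) / 2" by (intro divide_right_mono norm_triangle_ineq) simp
  finally have "norm (ch b - ch b') \<le> (norm U + norm V) / 2" .
  then show ?thesis using 1 2 unfolding U_def V_def by (simp add: norm_minus_commute[of b b'])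
qed

lemma sh_diff: assumes "norm (b' - b) \<le> 1"
  shows "norm (sh b - sh b') \<le> exp 1 * exp (norm b) * norm (b' - b)"
proof -
  have 1: "norm (exp (b + (b' - b)) - exp b) \<le> exp 1 * exp (norm b) * norm (b' - b)"
    by (rule exp_diff_bound[OF assms])
  have 2: "norm (exp (-b + (-(b' - b))) - exp (-b)) \<le> exp 1 * exp (norm (-b)) * norm (-(b' - b))"
    by (rule exp_diff_bound) (metis assms norm_minus_cancel)
  define U where "U = exp (b + (b' - b)) - exp b"
  define V where "V = exp (-b + (-(b' - b))) - exp (-b)"
  have eq: "sh b - sh b' = - (U - V)/2"
    by (simp add: sh_def U_def V_def field_simps)
  have "norm (sh b - sh b') = norm (- (U - V)) / norm (2::complex)" by (simp only: eq norm_divide)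
  also have "\<dots> = norm (U - V) / 2" by (simp only: norm_minus_cancel) simp
  also have "\<dots> \<le> (norm U + norm V) / 2" by (intro divide_right_mono norm_triangle_ineq4) simp
  finally have "norm (sh b - sh b') \<le> (norm U + norm V) / 2" .
  then show ?thesis using 1 2 unfolding U_def V_def by (simp add: norm_minus_commute[of b b'])
qed

lemma L_bound: fixes a :: complex shows "norm ((exp (a/2) - exp (-(a/2)))/2) \<le> exp (norm a / 2) * (norm a / 2)"
proof -
  have "exp (a/2) - exp (-(a/2)) = (exp (a/2) - 1) - (exp (-(a/2)) - 1)" by simp
  then have "norm (exp (a/2) - exp (-(a/2))) \<le> norm (exp (a/2) - 1) + norm (exp (-(a/2)) - 1)"
    by (metis norm_triangle_ineq4)
  also have "\<dots> \<le> exp (norm (a/2)) * norm (a/2) + exp (norm (-(a/2))) * norm (-(a/2))"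
    by (intro add_mono exp_minus_one_bound)
  finally show ?thesis by (simp add: norm_divide mult.commute)
qed

theorem lemmaA5:
  fixes a b b' :: complex and A :: real
  assumes "A > 0" and "cmod (b' - b) \<le> 1" and "cmod a * exp (cmod b) \<le> A"
  shows "opnorm (flow Ym b ** flow Xm a ** flow Ym (-b) - flow Ym b' ** flow Xm a ** flow Ym (-b'))
         \<le> 10 * exp A * cmod a * exp (cmod b) * cmod (b' - b)"
proof -
  define L where "L = (exp (a/2) - exp (-(a/2)))/2"
  define cd where "cd = ch b - ch b'"
  define sd where "sd = sh b - sh b'"
  define B where "B = exp 1 * exp (cmod b) * cmod (b' - b)"
  have eq: "flow Ym b ** flow Xm a ** flow Ym (-b) - flow Ym b' ** flow Xm a ** flow Ym (-b')
     = mk (cd * L) (- (sd * L)) (sd * L) (- (cd * L))"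
    unfolding prod_formula mk_diff L_def cd_def sd_def by (simp add: mk_eq_iff field_simps)
  have hc: "norm cd \<le> B" unfolding cd_def B_def by (rule ch_diff[OF assms(2)])
  have hs: "norm sd \<le> B" unfolding sd_def B_def by (rule sh_diff[OF assms(2)])
  have hL: "norm L \<le> exp (norm a / 2) * (norm a / 2)" unfolding L_def by (rule L_bound)
  have B0: "0 \<le> B" by (simp add: B_def)
  have "opnorm (mk (cd * L) (- (sd * L)) (sd * L) (- (cd * L))) \<le> 2 * norm cd * norm L + 2 * norm sd * norm L"
    using opnorm_mk[of "cd * L" "- (sd * L)" "sd * L" "- (cd * L)"] by (simp add: norm_mult algebra_simps)
  also have "\<dots> \<le> 2 * B * (exp (norm a / 2) * (norm a / 2)) + 2 * B * (exp (norm a / 2) * (norm a / 2))"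
    by (intro add_mono mult_mono hc hs hL mult_left_mono) (simp_all add: B0)
  also have "\<dots> = 2 * exp 1 * exp (norm a / 2) * (cmod a * exp (cmod b) * cmod (b' - b))"
    by (simp add: B_def algebra_simps)
  also have "\<dots> \<le> 10 * exp A * (cmod a * exp (cmod b) * cmod (b' - b))"
  proof (rule mult_right_mono)
    have "cmod a \<le> cmod a * exp (cmod b)" by (simp add: mult_le_cancel_left1)
    then have "norm a / 2 \<le> A" using assms by linarith
    then have "exp (norm a / 2) \<le> exp A" by simp
    moreover have "2 * exp 1 \<le> (10::real)" using exp_le by linarith
    ultimately show "2 * exp 1 * exp (norm a / 2) \<le> 10 * exp A"
      by (intro mult_mono) simp_all
  qed simp
  finally show ?thesis unfolding eq by (simp add: mult.assoc)
qed

end
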